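(* For every $\theta,\bar\theta\in\mathbb R^m$ there exists a stochastic policy $\mu_{\theta,\bar\theta}:\mathcal S\to\Delta_{|\mathcal A|}$ such that \[ V_\theta-V_{\bar\theta}=\Pi^{\mu_{\theta,\bar\theta}}\Phi(\theta-\bar\theta). \] Moreover, $\mu_{\theta,\bar\theta}$ can be chosen as a measurable function of $(\theta,\bar\theta)$.
   Context: Let $\mathcal S=\{1,\dots,|\mathcal S|\}$ and $\mathcal A=\{1,\dots,|\mathcal A|\}$ be finite sets. State-action vectors in $\mathbb R^{|\mathcal S||\mathcal A|}$ are ordered as $(1,1),(2,1),\dots,(|\mathcal S|,1),(1,2),\dots$. The feature matrix $\Phi\in\mathbb R^{|\mathcal S||\mathcal A|\times m}$ has rows $\phi(s,a)^\top$. For $\theta\in\mathbb R^m$, $V_\theta\in\mathbb R^{|\mathcal S|}$ is defined by $V_\theta(s)=\max_{a\in\mathcal A}\phi(s,a)^\top\theta$. A stochastic policy is a map $\mu:\mathcal S\to\Delta_{|\mathcal A|}$, where $\Delta_{|\mathcal A|}$ is the probability simplex. The matrix $\Pi^\mu\in\mathbb R^{|\mathcal S|\times|\mathcal S||\mathcal A|}$ has entry $\mu(a\mid s)$ at row $s$, column $(s,a)$, and zeros elsewhere, so $(\Pi^\mu Q)(s)=\sum_a\mu(a\mid s)Q(s,a)$. *)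

theory Defs
  imports "HOL-Analysis.Analysis"
begin

text \<open>States: finite type 's; actions: finite type 'a; parameters: real^'m.
  The feature matrix Phi is given by its rows phi s a.\<close>

definition Vtheta :: "('s \<Rightarrow> 'a::finite \<Rightarrow> real^'m) \<Rightarrow> real^'m \<Rightarrow> 's \<Rightarrow> real" where
  "Vtheta phi \<theta> s = Max ((\<lambda>a. phi s a \<bullet> \<theta>) ` UNIV)"

definition Phi_apply :: "('s \<Rightarrow> 'a \<Rightarrow> real^'m) \<Rightarrow> real^'m \<Rightarrow> 's \<Rightarrow> 'a \<Rightarrow> real" where
  "Phi_apply phi \<theta> s a = phi s a \<bullet> \<theta>"

text \<open>A stochastic policy: mu s a = mu(a|s), each mu s in the probability simplex.\<close>
definition stochastic_policy :: "('s \<Rightarrow> 'a::finite \<Rightarrow> real) \<Rightarrow> bool" where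
  "stochastic_policy mu \<longleftrightarrow> (\<forall>s. (\<forall>a. 0 \<le> mu s a) \<and> (\<Sum>a\<in>UNIV. mu s a) = 1)"

definition Pi_apply :: "('s \<Rightarrow> 'a::finite \<Rightarrow> real) \<Rightarrow> ('s \<Rightarrow> 'a \<Rightarrow> real) \<Rightarrow> 's \<Rightarrow> real" where
  "Pi_apply mu Q s = (\<Sum>a\<in>UNIV. mu s a * Q s a)"

end

theory Submission
  imports Defs
begin

lemma inner_fst_meas[measurable]: "(\<lambda>p::(real^'m)\<times>(real^'m). c \<bullet> fst p) \<in> borel_measurable borel"
  by (intro borel_measurable_continuous_onI continuous_intros)
lemma inner_snd_meas[measurable]: "(\<lambda>p::(real^'m)\<times>(real^'m). c \<bullet> snd p) \<in> borel_measurable borel"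
  by (intro borel_measurable_continuous_onI continuous_intros)

definition cntf :: "('s \<Rightarrow> 'a::finite \<Rightarrow> real^'m) \<Rightarrow> real^'m \<Rightarrow> 's \<Rightarrow> real" where
  "cntf phi x s = (\<Sum>b\<in>UNIV. of_bool (phi s b \<bullet> x = Vtheta phi x s))"
definition uf :: "('s \<Rightarrow> 'a::finite \<Rightarrow> real^'m) \<Rightarrow> real^'m \<Rightarrow> 's \<Rightarrow> 'a \<Rightarrow> real" where
  "uf phi x s a = of_bool (phi s a \<bullet> x = Vtheta phi x s) / cntf phi x s"

lemma V_ge: "phi s a \<bullet> x \<le> Vtheta phi x s"
  unfolding Vtheta_def by (rule Max_ge) auto

lemma V_att: "\<exists>a. phi s a \<bullet> x = Vtheta phi x s"
proof -
  have "Vtheta phi x s \<in> (\<lambda>a. phi s a \<bullet> x) ` UNIV"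
    unfolding Vtheta_def by (rule Max_in) auto
  then show ?thesis by auto
qed

lemma cnt_ge: "cntf phi x s \<ge> 1"
proof -
  obtain a where a: "phi s a \<bullet> x = Vtheta phi x s" using V_att[of phi s x] by blast
  have "(1::real) = of_bool (phi s a \<bullet> x = Vtheta phi x s)" using a by simp
  also have "\<dots> \<le> cntf phi x s" unfolding cntf_def
    by (rule member_le_sum) auto
  finally show ?thesis .
qed

lemma uf_nonneg: "uf phi x s a \<ge> 0"
  using cnt_ge[of phi x s] unfolding uf_def by auto

lemma uf_sum: "(\<Sum>a\<in>UNIV. uf phi x s a) = 1"
  using cnt_ge[of phi x s] unfolding uf_def by (simp only: sum_divide_distrib[symmetric] cntf_def[symmetric]) simp

lemma uf_val: "(\<Sum>a\<in>UNIV. uf phi x s a * (phi s a \<bullet> x)) = Vtheta phi x s"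
proof -
  have "(\<Sum>a\<in>UNIV. uf phi x s a * (phi s a \<bullet> x)) = (\<Sum>a\<in>UNIV. uf phi x s a * Vtheta phi x s)"
    by (rule sum.cong) (auto simp: uf_def)
  also have "\<dots> = Vtheta phi x s" by (simp add: sum_distrib_right[symmetric] uf_sum)
  finally show ?thesis .
qed

lemma uf_le: "(\<Sum>a\<in>UNIV. uf phi x s a * (phi s a \<bullet> y)) \<le> Vtheta phi y s"
proof -
  have "(\<Sum>a\<in>UNIV. uf phi x s a * (phi s a \<bullet> y)) \<le> (\<Sum>a\<in>UNIV. uf phi x s a * Vtheta phi y s)"
    by (rule sum_mono) (auto intro: mult_left_mono V_ge uf_nonneg)
  also have "\<dots> = Vtheta phi y s" by (simp add: sum_distrib_right[symmetric] uf_sum)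
  finally show ?thesis .
qed

lemma uf_meas1[measurable]: "(\<lambda>p::(real^'m)\<times>(real^'m). uf (phi::'s::finite \<Rightarrow> 'a::finite \<Rightarrow> real^'m) (fst p) s a) \<in> borel_measurable borel"
  unfolding uf_def cntf_def Vtheta_def by measurable
lemma uf_meas2[measurable]: "(\<lambda>p::(real^'m)\<times>(real^'m). uf (phi::'s::finite \<Rightarrow> 'a::finite \<Rightarrow> real^'m) (snd p) s a) \<in> borel_measurable borel"
  unfolding uf_def cntf_def Vtheta_def by measurable
lemma V_meas1[measurable]: "(\<lambda>p::(real^'m)\<times>(real^'m). Vtheta (phi::'s::finite \<Rightarrow> 'a::finite \<Rightarrow> real^'m) (fst p) s) \<in> borel_measurable borel"
  unfolding Vtheta_def by measurable
lemma V_meas2[measurable]: "(\<lambda>p::(real^'m)\<times>(real^'m). Vtheta (phi::'s::finite \<Rightarrow> 'a::finite \<Rightarrow> real^'m) (snd p) s) \<in> borel_measurable borel"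
  unfolding Vtheta_def by measurable

theorem lemma3:
  fixes phi :: "'s::finite \<Rightarrow> 'a::finite \<Rightarrow> real^'m"
  shows "\<exists>M :: ((real^'m) \<times> (real^'m)) \<Rightarrow> 's \<Rightarrow> 'a \<Rightarrow> real.
           (\<forall>s a. (\<lambda>p. M p s a) \<in> borel_measurable borel) \<and>
           (\<forall>\<theta> \<theta>'. stochastic_policy (M (\<theta>, \<theta>')) \<and>
              (\<lambda>s. Vtheta phi \<theta> s - Vtheta phi \<theta>' s)
                = Pi_apply (M (\<theta>, \<theta>')) (Phi_apply phi (\<theta> - \<theta>')))"
proof -
  define U where "U p s = (\<Sum>a\<in>UNIV. uf phi (fst p) s a * (phi s a \<bullet> fst p - phi s a \<bullet> snd p))" for p :: "(real^'m) \<times> (real^'m)" and s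
  define L where "L p s = (\<Sum>a\<in>UNIV. uf phi (snd p) s a * (phi s a \<bullet> fst p - phi s a \<bullet> snd p))" for p :: "(real^'m) \<times> (real^'m)" and s
  define d where "d p s = Vtheta phi (fst p) s - Vtheta phi (snd p) s" for p :: "(real^'m) \<times> (real^'m)" and s
  define t where "t p s = (if U p s = L p s then 1 else (d p s - L p s) / (U p s - L p s))" for p s
  define M where "M p s a = t p s * uf phi (fst p) s a + (1 - t p s) * uf phi (snd p) s a" for p s a
  have Uge: "d p s \<le> U p s" for p s
  proof -
    have "U p s = (\<Sum>a\<in>UNIV. uf phi (fst p) s a * (phi s a \<bullet> fst p)) - (\<Sum>a\<in>UNIV. uf phi (fst p) s a * (phi s a \<bullet> snd p))"
      unfolding U_def by (simp add: right_diff_distrib sum_subtractf)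
    then show ?thesis unfolding d_def using uf_val[of phi "fst p" s] uf_le[of phi "fst p" s "snd p"] by linarith
  qed
  have Lle: "L p s \<le> d p s" for p s
  proof -
    have "L p s = (\<Sum>a\<in>UNIV. uf phi (snd p) s a * (phi s a \<bullet> fst p)) - (\<Sum>a\<in>UNIV. uf phi (snd p) s a * (phi s a \<bullet> snd p))"
      unfolding L_def by (simp add: right_diff_distrib sum_subtractf)
    then show ?thesis unfolding d_def using uf_val[of phi "snd p" s] uf_le[of phi "snd p" s "fst p"] by linarith
  qed
  have t01: "0 \<le> t p s \<and> t p s \<le> 1" for p s
    using Uge[of p s] Lle[of p s] unfolding t_def by (auto simp: divide_simps)
  have meas: "(\<lambda>p. M p s a) \<in> borel_measurable borel" for s a
    unfolding M_def t_def U_def L_def d_def by measurable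
  have pol: "stochastic_policy (M p)" for p
    unfolding stochastic_policy_def
  proof (intro allI conjI)
    fix s a show "0 \<le> M p s a" unfolding M_def using t01[of p s] uf_nonneg[of phi]
      by (simp add: add_nonneg_nonneg mult_nonneg_nonneg)
  next
    fix s show "(\<Sum>a\<in>UNIV. M p s a) = 1"
      unfolding M_def by (simp add: sum.distrib sum_distrib_left[symmetric] uf_sum)
  qed
  have eq: "Pi_apply (M p) (Phi_apply phi (fst p - snd p)) s = d p s" for p s
  proof -
    have "Pi_apply (M p) (Phi_apply phi (fst p - snd p)) s = t p s * U p s + (1 - t p s) * L p s"
      unfolding Pi_apply_def Phi_apply_def M_def U_def L_def
      by (simp add: inner_diff_right distrib_right sum.distrib sum_distrib_left mult.assoc)
    also have "\<dots> = d p s"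
      using Uge[of p s] Lle[of p s] unfolding t_def by (auto simp: field_simps)
    finally show ?thesis .
  qed
  show ?thesis
    apply (rule exI[of _ M])
    using meas pol eq[of "(\<theta>, \<theta>')" for \<theta> \<theta>'] unfolding d_def by auto
qed
end
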